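(* Let $\mathrm r=(r_1,\dots,r_d)\in\mathbb{Z}_+^d$ with $\mathrm r>0$. Then the map $\Phi:\bar{\mathcal F}_d^{\mathrm r}\to \bar S_d^{\mathrm r}\times C_d^{\mathrm r}$, $(\mathbf f,c_{\mathbf f})\mapsto(\Psi((\mathbf f,c_{\mathbf f})),\mathrm c_{(\mathbf f,c_{\mathbf f})})$, is a bijection.
   Context: $d\ge2$, $[d]=\{1,\dots,d\}$. A plane forest is a finite or infinite sequence $\mathbf t_1,\mathbf t_2,\dots$ of finite rooted plane (ordered) trees; its vertices are listed in breadth-first search order (first the vertices of $\mathbf t_1$ generation by generation, each generation from left to right, then those of $\mathbf t_2$, etc.). A $d$-type forest $(\mathbf f,c_{\mathbf f})$ is a plane forest with a map $c_{\mathbf f}$ from its vertices to $[d]$ (the type) such that children of a common parent appear, from left to right, in nondecreasing order of type; $\mathcal F_d$ is the set of (unlabeled) $d$-type forests. $p_j(u)$ is the number of children of type $j$ of the vertex $u$. A subtree of type $i$ is a maximal connected subgraph all of whose vertices have type $i$; the subforest $\mathbf f^{(i)}$ of type $i$ is the plane forest formed by the subtrees of type $i$, ranked according to the order of their roots in $\mathbf f$; $u^{(i)}_1,u^{(i)}_2,\dots$ are its vertices in its own breadth-first order. The root type sequence is $\mathrm c_{(\mathbf f,c_{\mathbf f})}=(c_{\mathbf f}(r(\mathbf t_1)),c_{\mathbf f}(r(\mathbf t_2)),\dots)$ where $r(\mathbf t)$ is the root of $\mathbf t$. $S_d$: families $x=(x^{(1)},\dots,x^{(d)})$, $x^{(i)}=(x^{i,1},\dots,x^{i,d})$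 a $\mathbb{Z}^d$-valued sequence indexed by $\{0,\dots,n_i\}$ ($0\le n_i\le\infty$), $x^{(i)}_0=0$, $x^{i,j}$ nondecreasing for $i\ne j$, $x^{i,i}_{n+1}-x^{i,i}_n\ge -1$; $(n_1,\dots,n_d)$ is its length; $x^{i,j}(n):=x^{i,j}_n$. $\Psi:\mathcal F_d\to S_d$ maps $(\mathbf f,c_{\mathbf f})$ to $x$ where $n_i$ is the number of vertices of $\mathbf f^{(i)}$, $x^{(i)}_0=0$, and $x^{i,j}_{n+1}-x^{i,j}_n=p_j(u^{(i)}_{n+1})$ for $j\ne i$, $x^{i,i}_{n+1}-x^{i,i}_n=p_i(u^{(i)}_{n+1})-1$, $0\le n\le n_i-1$. Coordinatewise order $\le$ on $\overline{\mathbb{Z}}_+^d$; $\mathrm q<\mathrm q'$ means $\mathrm q\le\mathrm q'$ and $\mathrm q\ne\mathrm q'$. A solution of $(\mathrm r,x)$ (for $x$ of length $\mathrm q$) is $\mathrm s\in\mathbb{Z}_+^d$, $\mathrm s\le\mathrm q$, with $r_j+\sum_i x^{i,j}(s_i)=0$ for all $j$; the smallest solution is a solution $\le$ every other solution. $S_d^{\mathrm r}$ is the set of $x\in S_d$ whose length lies in $\mathbb{N}^d$ ($\mathbb N=\{1,2,\dots\}$) and is the smallest solution of $(\mathrm r,x)$; $\bar S_d^{\mathrm r}$ is the set of $x\in S_d^{\mathrm r}$ with $x^{i,i}_k=-k$ for all $k$ and $i$. For $r=r_1+\dots+r_d$, $C_d^{\mathrm r}=\{c\in[d]^r:\#\{j\in[r]:c_j=i\}=r_i,\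 i\in[d]\}$. $\mathcal F_d^{\mathrm r}$ is the set of $(\mathbf f,c_{\mathbf f})\in\mathcal F_d$ with $r_1+\dots+r_d$ trees, containing at least one vertex of each type, with root type sequence in $C_d^{\mathrm r}$; $\bar{\mathcal F}_d^{\mathrm r}$ is the set of those $(\mathbf f,c_{\mathbf f})\in\mathcal F_d^{\mathrm r}$ in which no vertex of type $i$ has a child of type $i$, for every $i$. *)

theory Defs
  imports Main
begin

text \<open>A finite rooted plane (ordered) tree whose vertices carry a label; children are
  listed from left to right. Equality of values is equality of unlabelled plane trees.\<close>
datatype 'a ptree = PNode 'a "'a ptree list"

fun label :: "'a ptree \<Rightarrow> 'a" where
  "label (PNode a ts) = a"

fun kids :: "'a ptree \<Rightarrow> 'a ptree list" where
  "kids (PNode a ts) = ts"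

fun nverts :: "'a ptree \<Rightarrow> nat" where
  "nverts (PNode a ts) = Suc (sum_list (map nverts ts))"

text \<open>Each vertex is recorded together with the label of its
  parent (None for a root).\<close>
primrec pgens :: "('a option \<times> 'a ptree) list \<Rightarrow> nat \<Rightarrow> ('a option \<times> 'a ptree) list" where
  "pgens xs 0 = xs"
| "pgens xs (Suc k) =
     concat (map (\<lambda>(p, v). map (\<lambda>w. (Some (label v), w)) (kids v)) (pgens xs k))"

text \<open>Breadth-first order of the vertices of a tree: generation by generation, each from left
  to right (the height is smaller than the number of vertices, so all generations are included).
  A vertex is represented by the subtree rooted at it, paired with its parent's label.\<close>
definition bfs_tree :: "'a ptree \<Rightarrow> ('a option \<times> 'a ptree) list" where
  "bfs_tree t = concat (map (pgens [(None, t)]) [0..<nverts t])"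

definition bfs_forest :: "'a ptree list \<Rightarrow> ('a option \<times> 'a ptree) list" where
  "bfs_forest ts = concat (map bfs_tree ts)"

fun wf_dtree :: "nat \<Rightarrow> nat ptree \<Rightarrow> bool" where
  "wf_dtree d (PNode c ts) =
     (c \<in> {1..d} \<and> sorted (map label ts) \<and> (\<forall>t\<in>set ts. wf_dtree d t))"

text \<open>Finite d-type forests (the forests considered in the statement have finitely many trees).\<close>
definition Fd :: "nat \<Rightarrow> nat ptree list set" where
  "Fd d = {ts. \<forall>t\<in>set ts. wf_dtree d t}"

definition vertices :: "nat ptree list \<Rightarrow> nat ptree list" where
  "vertices ts = map snd (bfs_forest ts)"

definition pcount :: "nat \<Rightarrow> nat ptree \<Rightarrow> nat" where
  "pcount j u = length (filter (\<lambda>w. label w = j) (kids u))"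

text \<open>The subtree of type i rooted at a vertex of type i: keep only type-i descendants
  connected through type-i vertices. Each vertex of the result is labelled by the
  corresponding vertex (subtree) of the original forest.\<close>
fun restr :: "nat \<Rightarrow> nat ptree \<Rightarrow> nat ptree ptree" where
  "restr i (PNode c ts) = PNode (PNode c ts) (map (restr i) (filter (\<lambda>t. label t = i) ts))"

text \<open>Roots of the subtrees of type i (maximal connected type-i subgraphs), in the
  breadth-first order of the forest: type-i vertices that are roots or have a parent
  of type different from i.\<close>
definition sub_roots :: "nat \<Rightarrow> nat ptree list \<Rightarrow> nat ptree list" where
  "sub_roots i ts = map snd (filter (\<lambda>(p, v). label v = i \<and> p \<noteq> Some i) (bfs_forest ts))"

definition subforest :: "nat \<Rightarrow> nat ptree list \<Rightarrow> nat ptree ptree list" where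
  "subforest i ts = map (restr i) (sub_roots i ts)"

text \<open>u^(i)_1, u^(i)_2, ...: vertices of f^(i) in its own breadth-first order (list index 0
  corresponds to u_1), given as the corresponding vertices of the original forest.\<close>
definition useq :: "nat \<Rightarrow> nat ptree list \<Rightarrow> nat ptree list" where
  "useq i ts = map (label \<circ> snd) (bfs_forest (subforest i ts))"

text \<open>An element of S_d with finite length (n_1,...,n_d) is represented by a pair (q, x):
  q i = n_i and x i j n = x^{i,j}_n for i, j in [d], 0 <= n <= n_i. For canonicity,
  q is 0 outside [d] and x is 0 outside its domain.\<close>
definition Sd_fin :: "nat \<Rightarrow> ((nat \<Rightarrow> nat) \<times> (nat \<Rightarrow> nat \<Rightarrow> nat \<Rightarrow> int)) set" where
  "Sd_fin d = {(q, x).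
     (\<forall>i. i \<notin> {1..d} \<longrightarrow> q i = 0) \<and>
     (\<forall>i j n. (i \<notin> {1..d} \<or> j \<notin> {1..d} \<or> n > q i) \<longrightarrow> x i j n = 0) \<and>
     (\<forall>i\<in>{1..d}. \<forall>j\<in>{1..d}. x i j 0 = 0) \<and>
     (\<forall>i\<in>{1..d}. \<forall>j\<in>{1..d}. i \<noteq> j \<longrightarrow> (\<forall>n < q i. x i j n \<le> x i j (Suc n))) \<and>
     (\<forall>i\<in>{1..d}. \<forall>n < q i. x i i (Suc n) - x i i n \<ge> -1)}"

definition is_solution ::
  "nat \<Rightarrow> (nat \<Rightarrow> nat) \<Rightarrow> (nat \<Rightarrow> nat) \<Rightarrow> (nat \<Rightarrow> nat \<Rightarrow> nat \<Rightarrow> int) \<Rightarrow> (nat \<Rightarrow> nat) \<Rightarrow> bool" where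
  "is_solution d r q x s \<longleftrightarrow>
     (\<forall>i\<in>{1..d}. s i \<le> q i) \<and>
     (\<forall>j\<in>{1..d}. int (r j) + (\<Sum>i=1..d. x i j (s i)) = 0)"

definition is_smallest_solution ::
  "nat \<Rightarrow> (nat \<Rightarrow> nat) \<Rightarrow> (nat \<Rightarrow> nat) \<Rightarrow> (nat \<Rightarrow> nat \<Rightarrow> nat \<Rightarrow> int) \<Rightarrow> (nat \<Rightarrow> nat) \<Rightarrow> bool" where
  "is_smallest_solution d r q x s \<longleftrightarrow>
     is_solution d r q x s \<and>
     (\<forall>s'. is_solution d r q x s' \<longrightarrow> (\<forall>i\<in>{1..d}. s i \<le> s' i))"

definition Sr :: "nat \<Rightarrow> (nat \<Rightarrow> nat) \<Rightarrow> ((nat \<Rightarrow> nat) \<times> (nat \<Rightarrow> nat \<Rightarrow> nat \<Rightarrow> int)) set" where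
  "Sr d r = {(q, x). (q, x) \<in> Sd_fin d \<and> (\<forall>i\<in>{1..d}. q i \<ge> 1) \<and> is_smallest_solution d r q x q}"

definition barSr :: "nat \<Rightarrow> (nat \<Rightarrow> nat) \<Rightarrow> ((nat \<Rightarrow> nat) \<times> (nat \<Rightarrow> nat \<Rightarrow> nat \<Rightarrow> int)) set" where
  "barSr d r = {(q, x). (q, x) \<in> Sr d r \<and> (\<forall>i\<in>{1..d}. \<forall>k \<le> q i. x i i k = - int k)}"

definition Cdr :: "nat \<Rightarrow> (nat \<Rightarrow> nat) \<Rightarrow> nat list set" where
  "Cdr d r = {c. length c = (\<Sum>i=1..d. r i) \<and> (\<forall>j\<in>set c. j \<in> {1..d}) \<and>
                 (\<forall>i\<in>{1..d}. length (filter (\<lambda>j. j = i) c) = r i)}"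

definition Psi :: "nat \<Rightarrow> nat ptree list \<Rightarrow> (nat \<Rightarrow> nat) \<times> (nat \<Rightarrow> nat \<Rightarrow> nat \<Rightarrow> int)" where
  "Psi d ts =
     ((\<lambda>i. if i \<in> {1..d} then length (useq i ts) else 0),
      (\<lambda>i j n. if i \<in> {1..d} \<and> j \<in> {1..d} \<and> n \<le> length (useq i ts)
               then (\<Sum>k<n. int (pcount j (useq i ts ! k)) - (if i = j then 1 else 0))
               else 0))"

definition root_types :: "nat ptree list \<Rightarrow> nat list" where
  "root_types ts = map label ts"

definition Fr :: "nat \<Rightarrow> (nat \<Rightarrow> nat) \<Rightarrow> nat ptree list set" where
  "Fr d r = {ts. ts \<in> Fd d \<and> length ts = (\<Sum>i=1..d. r i) \<and>
                 (\<forall>i\<in>{1..d}. \<exists>v\<in>set (vertices ts). label v = i) \<and>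
                 root_types ts \<in> Cdr d r}"

definition barFr :: "nat \<Rightarrow> (nat \<Rightarrow> nat) \<Rightarrow> nat ptree list set" where
  "barFr d r = {ts. ts \<in> Fr d r \<and>
                    (\<forall>v\<in>set (vertices ts). \<forall>w\<in>set (kids v). label w \<noteq> label v)}"

definition Phi :: "nat \<Rightarrow> nat ptree list \<Rightarrow> ((nat \<Rightarrow> nat) \<times> (nat \<Rightarrow> nat \<Rightarrow> nat \<Rightarrow> int)) \<times> nat list" where
  "Phi d ts = (Psi d ts, root_types ts)"

end

theory Submission
  imports Defs "HOL-Library.Multiset"
begin


definition sig :: "nat ptree \<Rightarrow> nat list" where "sig t = map label (kids t)"
definition cnt :: "nat \<Rightarrow> nat list \<Rightarrow> nat" where "cnt j xs = length (filter (\<lambda>l. l = j) xs)"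
definition ch :: "nat ptree list \<Rightarrow> nat ptree list" where "ch ts = concat (map kids ts)"
definition tsize :: "nat ptree list \<Rightarrow> nat" where "tsize ts = sum_list (map nverts ts)"

primrec gen :: "nat ptree list \<Rightarrow> nat \<Rightarrow> nat ptree list" where
  "gen ts 0 = ts" | "gen ts (Suc k) = gen (ch ts) k"

definition Lt :: "nat ptree list \<Rightarrow> nat ptree list" where
  "Lt ts = concat (map (gen ts) [0..<tsize ts])"

lemma cnt_append[simp]: "cnt j (xs @ ys) = cnt j xs + cnt j ys" by (simp add: cnt_def)
lemma cnt_Nil[simp]: "cnt j [] = 0" by (simp add: cnt_def)
lemma cnt_Cons: "cnt j (x # xs) = (if x = j then Suc (cnt j xs) else cnt j xs)" by (simp add: cnt_def)

lemma gen_Suc': "gen ts (Suc k) = ch (gen ts k)" by (induction k arbitrary: ts) auto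

lemma nverts_kids: "nverts t = Suc (tsize (kids t))" by (cases t) (auto simp: tsize_def)
lemma tsize_Cons[simp]: "tsize (t # ts) = nverts t + tsize ts" by (simp add: tsize_def)
lemma ch_Cons[simp]: "ch (t # ts) = kids t @ ch ts" by (simp add: ch_def)

lemma tsize_Nil[simp]: "tsize [] = 0" by (simp add: tsize_def)
lemma ch_Nil[simp]: "ch [] = []" by (simp add: ch_def)
lemma tsize_append[simp]: "tsize (xs @ ys) = tsize xs + tsize ys" by (simp add: tsize_def)
lemma ch_append[simp]: "ch (xs @ ys) = ch xs @ ch ys" by (simp add: ch_def)

lemma tsize_ch: "tsize (ch ts) + length ts = tsize ts"
  by (induction ts) (auto simp: nverts_kids)


lemma tsize_0: "tsize ts = 0 \<longleftrightarrow> ts = []"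
  by (cases ts) (auto simp: nverts_kids)

lemma tsize_ch_less: "ts \<noteq> [] \<Longrightarrow> tsize (ch ts) < tsize ts"
  using tsize_ch[of ts] by (cases ts) auto

lemma ch_induct:
  assumes "\<And>ts. (ts \<noteq> [] \<Longrightarrow> P (ch ts)) \<Longrightarrow> P ts" shows "P ts"
proof (induction ts rule: measure_induct_rule[where f=tsize])
  case (less ts) then show ?case using assms tsize_ch_less by blast
qed

lemma gen_empty: "tsize ts \<le> k \<Longrightarrow> gen ts k = []"
proof (induction k arbitrary: ts)
  case 0 then show ?case using tsize_0 by auto
next
  case (Suc k)
  show ?case
  proof (cases "ts = []")
    case True then show ?thesis using Suc.IH by simp
  next
    case False
    then have "tsize (ch ts) \<le> k" using tsize_ch_less[OF False] Suc.prems by linarith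
    then show ?thesis using Suc.IH by simp
  qed
qed

lemma Lt_stable: "tsize ts \<le> m \<Longrightarrow> concat (map (gen ts) [0..<m]) = Lt ts"
proof -
  assume a: "tsize ts \<le> m"
  have "[0..<m] = [0..<tsize ts] @ [tsize ts..<m]" using a upt_add_eq_append[of 0 "tsize ts" "m - tsize ts"] by simp
  moreover have "\<forall>k\<in>set [tsize ts..<m]. gen ts k = []" using gen_empty by auto
  ultimately show ?thesis by (simp add: Lt_def)
qed

lemma Lt_rec: "Lt ts = ts @ Lt (ch ts)"
proof (cases "ts = []")
  case True then show ?thesis by (simp add: Lt_def)
next
  case False
  then obtain m where m: "tsize ts = Suc m" using tsize_0 by (cases "tsize ts") auto
  have le: "tsize (ch ts) \<le> m" using tsize_ch_less[OF False] m by simp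
  have "Lt ts = concat (map (gen ts) (0 # map Suc [0..<m]))"
    unfolding Lt_def m by (simp add: upt_conv_Cons map_Suc_upt del: upt_Suc)
  also have "\<dots> = ts @ concat (map (gen (ch ts)) [0..<m])" by (simp add: comp_def)
  also have "\<dots> = ts @ Lt (ch ts)" using Lt_stable[OF le] by simp
  finally show ?thesis .
qed

lemma Lt_Nil[simp]: "Lt [] = []" by (simp add: Lt_def)

lemma length_Lt: "length (Lt ts) = tsize ts"
proof (induction ts rule: ch_induct)
  case (1 ts) then show ?case
    using tsize_ch[of ts] Lt_rec[of ts] by (cases "ts = []") auto
qed

definition F :: "nat ptree list \<Rightarrow> nat ptree list" where
  "F ts = concat (map (\<lambda>t. Lt [t]) ts)"

lemma F_Nil[simp]: "F [] = []" and F_Cons[simp]: "F (t # ts) = Lt [t] @ F ts"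
  and F_append[simp]: "F (xs @ ys) = F xs @ F ys" by (auto simp: F_def)

lemma pgens_snd: "map snd (pgens xs k) = gen (map snd xs) k"
proof (induction k)
  case 0 then show ?case by simp
next
  case (Suc k)
  have "map snd (pgens xs (Suc k)) = ch (map snd (pgens xs k))"
    by (simp add: ch_def map_concat comp_def case_prod_beta)
  then show ?case using Suc by (simp add: gen_Suc' del: gen.simps(2))
qed

lemma bfs_tree_snd: "map snd (bfs_tree t) = Lt [t]"
  by (simp add: bfs_tree_def Lt_def map_concat comp_def pgens_snd[of "[(None, t)]", simplified])

lemma vertices_F: "vertices ts = F ts"
  by (simp add: vertices_def bfs_forest_def F_def map_concat comp_def bfs_tree_snd)

lemma gen_sub_Lt: "set (gen ts k) \<subseteq> set (Lt ts)"
proof (cases "k < tsize ts")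
  case True then show ?thesis unfolding Lt_def by auto
next
  case False then show ?thesis using gen_empty by simp
qed

lemma bfs_forest_parent:
  assumes "(p, v) \<in> set (bfs_forest ts)"
  shows "(p = None \<and> v \<in> set ts) \<or> (\<exists>w. p = Some (label w) \<and> w \<in> set (vertices ts) \<and> v \<in> set (kids w))"
proof -
  from assms obtain t k where t: "t \<in> set ts" and k: "(p, v) \<in> set (pgens [(None, t)] k)"
    by (auto simp: bfs_forest_def bfs_tree_def)
  show ?thesis
  proof (cases k)
    case 0 then show ?thesis using k t by auto
  next
    case (Suc k')
    with k obtain p' w where pw: "(p', w) \<in> set (pgens [(None, t)] k')" and
      "p = Some (label w)" "v \<in> set (kids w)" by auto
    moreover have "w \<in> set (gen [t] k')" using pw pgens_snd[of "[(None, t)]" k']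
      by (metis list.simps(8,9) set_map snd_conv image_eqI)
    then have "w \<in> set (Lt [t])" using gen_sub_Lt by blast
    then have "w \<in> set (vertices ts)" using t by (auto simp: vertices_F F_def)
    ultimately show ?thesis by blast
  qed
qed

lemma Lt_cases: "v \<in> set (Lt xs) \<Longrightarrow> v \<in> set xs \<or> (\<exists>w\<in>set (Lt xs). v \<in> set (kids w))"
proof (induction xs rule: ch_induct)
  case (1 xs)
  show ?case
  proof (cases "v \<in> set xs")
    case False
    then have xs: "xs \<noteq> []" "v \<in> set (Lt (ch xs))" using 1(2) Lt_rec[of xs] by auto
    from 1(1)[OF xs] show ?thesis using Lt_rec[of xs] by (auto simp: ch_def)
  qed simp
qed

lemma Lt_kids: "w \<in> set (Lt xs) \<Longrightarrow> v \<in> set (kids w) \<Longrightarrow> v \<in> set (Lt xs)"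
proof (induction xs rule: ch_induct)
  case (1 xs)
  show ?case
  proof (cases "w \<in> set xs")
    case True
    then have "v \<in> set (ch xs)" using 1(3) by (auto simp: ch_def)
    then have "v \<in> set (Lt (ch xs))" using Lt_rec[of "ch xs"] by auto
    then show ?thesis using Lt_rec[of xs] by auto
  next
    case False
    then have xs: "xs \<noteq> []" "w \<in> set (Lt (ch xs))" using 1(2) Lt_rec[of xs] by auto
    from 1(1)[OF xs(1) xs(2) 1(3)] show ?thesis using Lt_rec[of xs] by auto
  qed
qed

lemma Lt_sub: "set xs \<subseteq> set (Lt xs)" using Lt_rec[of xs] by auto

lemma ch_sig: "map label (ch xs) = concat (map sig xs)"
  by (induction xs) (auto simp: ch_def sig_def)

lemma conservation:
  "cnt j (map label (Lt xs)) = cnt j (map label xs) + cnt j (concat (map sig (Lt xs)))"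
proof (induction xs rule: ch_induct)
  case (1 xs)
  show ?case
  proof (cases "xs = []")
    case False
    have "cnt j (map label (Lt xs)) = cnt j (map label xs) + cnt j (map label (Lt (ch xs)))"
      using Lt_rec[of xs] by simp
    also have "\<dots> = cnt j (map label xs) + cnt j (map label (ch xs)) + cnt j (concat (map sig (Lt (ch xs))))"
      using 1(1)[OF False] by simp
    also have "\<dots> = cnt j (map label xs) + cnt j (concat (map sig (Lt xs)))"
      using Lt_rec[of xs] by (simp add: ch_sig)
    finally show ?thesis .
  qed simp
qed

lemma wf_from_Lt:
  assumes "\<forall>v\<in>set (Lt xs). label v \<in> {1..d} \<and> sorted (sig v)"
  shows "t \<in> set (Lt xs) \<Longrightarrow> wf_dtree d t"
proof (induction t)
  case (PNode c ts)
  then show ?case using assms Lt_kids[OF PNode.prems] by (auto simp: sig_def)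
qed

lemma wf_kids: "wf_dtree d t \<Longrightarrow> u \<in> set (kids t) \<Longrightarrow> wf_dtree d u"
  by (cases t) auto

lemma wf_to_Lt: "\<forall>t\<in>set xs. wf_dtree d t \<Longrightarrow> v \<in> set (Lt xs) \<Longrightarrow> wf_dtree d v"
proof (induction xs rule: ch_induct)
  case (1 xs)
  show ?case
  proof (cases "v \<in> set xs")
    case False
    then have xs: "xs \<noteq> []" "v \<in> set (Lt (ch xs))" using 1(3) Lt_rec[of xs] by auto
    have "\<forall>t\<in>set (ch xs). wf_dtree d t" using 1(2) wf_kids by (auto simp: ch_def)
    from 1(1)[OF xs(1) this xs(2)] show ?thesis .
  qed (use 1 in auto)
qed

lemma wf_label: "wf_dtree d t \<Longrightarrow> label t \<in> {1..d}" by (cases t) auto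
lemma wf_sig: "wf_dtree d t \<Longrightarrow> sorted (sig t) \<and> set (sig t) \<subseteq> {1..d}"
proof (cases t)
  case (PNode c ts)
  assume "wf_dtree d t"
  then show ?thesis using PNode wf_label[of d] by (force simp: sig_def)
qed




type_synonym dat = "nat \<Rightarrow> nat list list"

primrec pop :: "nat list \<Rightarrow> dat \<Rightarrow> (nat list list \<times> dat) option" where
  "pop [] Y = Some ([], Y)"
| "pop (l # ls) Y = (case Y l of [] \<Rightarrow> None | s # rest \<Rightarrow>
      (case pop ls (Y(l := rest)) of None \<Rightarrow> None | Some (ss, Y') \<Rightarrow> Some (s # ss, Y')))"

primrec group :: "nat list list \<Rightarrow> 'a list \<Rightarrow> 'a list list" where
  "group [] cs = []"
| "group (s # ss) cs = take (length s) cs # group ss (drop (length s) cs)"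

primrec decL :: "nat \<Rightarrow> nat list \<Rightarrow> dat \<Rightarrow> (nat ptree list \<times> dat) option" where
  "decL 0 ls Y = (if ls = [] then Some ([], Y) else None)"
| "decL (Suc n) ls Y = (if ls = [] then Some ([], Y) else
     (case pop ls Y of None \<Rightarrow> None | Some (ss, Y1) \<Rightarrow>
        (case decL n (concat ss) Y1 of None \<Rightarrow> None
          | Some (cs, Y2) \<Rightarrow> Some (map2 PNode ls (group ss cs), Y2))))"

primrec decF :: "nat \<Rightarrow> nat list \<Rightarrow> dat \<Rightarrow> (nat ptree list \<times> dat) option" where
  "decF n [] Y = Some ([], Y)"
| "decF n (a # as) Y = (case decL n [a] Y of None \<Rightarrow> None | Some (ts, Y1) \<Rightarrow>
      (case decF n as Y1 of None \<Rightarrow> None | Some (ts', Y2) \<Rightarrow> Some (ts @ ts', Y2)))"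

definition sq :: "nat ptree list \<Rightarrow> nat \<Rightarrow> nat list list" where
  "sq V i = map sig (filter (\<lambda>v. label v = i) V)"

lemma sq_append[simp]: "sq (a @ b) i = sq a i @ sq b i" by (simp add: sq_def)
lemma sq_Nil[simp]: "sq [] i = []" by (simp add: sq_def)

lemma group_concat: "map length ss = map length ks \<Longrightarrow> group ss (concat ks @ rest) = ks"
proof (induction ss arbitrary: ks)
  case Nil then show ?case by simp
next
  case (Cons s ss) then show ?case by (cases ks) auto
qed

lemma group_length[simp]: "length (group ss cs) = length ss" by (induction ss arbitrary: cs) auto

lemma group_map: "map (map f) (group ss cs) = group ss (map f cs)"
  by (induction ss arbitrary: cs) (auto simp: take_map drop_map)

lemma concat_group: "concat (group ss cs) = take (sum_list (map length ss)) cs"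
  by (induction ss arbitrary: cs) (auto simp: take_add)

lemma map2_PNode: "map2 PNode (map label xs) (map kids xs) = xs"
proof (induction xs)
  case (Cons x xs) then show ?case by (cases x) auto
qed simp

lemma label_map2: "length gs = length ls \<Longrightarrow> map label (map2 PNode ls gs) = ls"
proof (induction ls arbitrary: gs)
  case (Cons l ls) then show ?case by (cases gs) auto
qed simp

lemma kids_map2: "length gs = length ls \<Longrightarrow> map kids (map2 PNode ls gs) = gs"
proof (induction ls arbitrary: gs)
  case (Cons l ls) then show ?case by (cases gs) auto
qed simp

lemma pop_complete: "(\<forall>i. Y i = sq xs i @ W i) \<Longrightarrow> pop (map label xs) Y = Some (map sig xs, W)"
proof (induction xs arbitrary: Y)
  case Nil then show ?case by (auto simp: fun_eq_iff)
next
  case (Cons x xs)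
  let ?l = "label x"
  have Yl: "Y ?l = sig x # (sq xs ?l @ W ?l)" using Cons.prems[rule_format, of ?l] by (simp add: sq_def)
  have h: "\<forall>i. (Y(?l := sq xs ?l @ W ?l)) i = sq xs i @ W i"
    using Cons.prems by (auto simp: sq_def)
  have p: "pop (map label xs) (Y(?l := sq xs ?l @ W ?l)) = Some (map sig xs, W)"
    by (rule Cons.IH[OF h])
  show ?case using Yl p by simp
qed

lemma decL_complete:
  "tsize xs \<le> n \<Longrightarrow> (\<forall>i. Y i = sq (Lt xs) i @ Z i) \<Longrightarrow> decL n (map label xs) Y = Some (xs, Z)"
proof (induction n arbitrary: xs Y)
  case 0
  then have "xs = []" using tsize_0 by auto
  then show ?case using 0 by (auto simp: fun_eq_iff)
next
  case (Suc n)
  show ?case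
  proof (cases "xs = []")
    case True then show ?thesis using Suc by (auto simp: fun_eq_iff)
  next
    case False
    have le: "tsize (ch xs) \<le> n" using tsize_ch_less[OF False] Suc.prems by simp
    have "\<forall>i. Y i = sq xs i @ (sq (Lt (ch xs)) i @ Z i)"
      using Suc.prems(2) Lt_rec[of xs] by simp
    from pop_complete[OF this] have p: "pop (map label xs) Y = Some (map sig xs, \<lambda>i. sq (Lt (ch xs)) i @ Z i)" .
    have d: "decL n (concat (map sig xs)) (\<lambda>i. sq (Lt (ch xs)) i @ Z i) = Some (ch xs, Z)"
      using Suc.IH[OF le, of "\<lambda>i. sq (Lt (ch xs)) i @ Z i"] by (simp add: ch_sig[symmetric])
    have g: "group (map sig xs) (ch xs) = map kids xs"
      using group_concat[of "map sig xs" "map kids xs" "[]"] by (simp add: ch_def sig_def comp_def)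
    show ?thesis using False p d g map2_PNode[of xs] by simp
  qed
qed

lemma decF_complete:
  "(\<forall>t\<in>set ts. nverts t \<le> n) \<Longrightarrow> (\<forall>i. Y i = sq (F ts) i @ Z i) \<Longrightarrow> decF n (map label ts) Y = Some (ts, Z)"
proof (induction ts arbitrary: Y)
  case Nil then show ?case by (auto simp: fun_eq_iff)
next
  case (Cons t ts)
  have "decL n (map label [t]) Y = Some ([t], \<lambda>i. sq (F ts) i @ Z i)"
    using Cons.prems by (intro decL_complete) auto
  moreover have "decF n (map label ts) (\<lambda>i. sq (F ts) i @ Z i) = Some (ts, Z)"
    using Cons.IH[of "\<lambda>i. sq (F ts) i @ Z i"] Cons.prems by auto
  ultimately show ?case by simp
qed

lemma pop_sound: "pop ls Y = Some (ss, Y1) \<Longrightarrow>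
   length ss = length ls \<and> (\<forall>i. Y i = map snd (filter (\<lambda>p. fst p = i) (zip ls ss)) @ Y1 i)"
proof (induction ls arbitrary: Y ss)
  case Nil then show ?case by auto
next
  case (Cons l ls)
  from Cons.prems obtain s rest ss' where Yl: "Y l = s # rest" and
    p: "pop ls (Y(l := rest)) = Some (ss', Y1)" and ss: "ss = s # ss'"
    by (auto split: list.splits option.splits)
  from Cons.IH[OF p] show ?case using Yl ss by (auto split: if_splits)
qed

lemma sq_zip: "sq xs i = map snd (filter (\<lambda>p. fst p = i) (zip (map label xs) (map sig xs)))"
  by (induction xs) (auto simp: sq_def)

lemma decL_sound: "decL n ls Y = Some (xs, Z) \<Longrightarrow> map label xs = ls \<and> (\<forall>i. Y i = sq (Lt xs) i @ Z i)"
proof (induction n arbitrary: ls Y xs)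
  case 0 then show ?case by (auto split: if_splits)
next
  case (Suc n)
  show ?case
  proof (cases "ls = []")
    case True then show ?thesis using Suc by auto
  next
    case False
    from Suc.prems False obtain ss Y1 cs where p: "pop ls Y = Some (ss, Y1)" and
      d: "decL n (concat ss) Y1 = Some (cs, Z)" and xs: "xs = map2 PNode ls (group ss cs)"
      by (auto split: option.splits)
    from pop_sound[OF p] have len: "length ss = length ls" and
      Y: "\<forall>i. Y i = map snd (filter (\<lambda>p. fst p = i) (zip ls ss)) @ Y1 i" by auto
    from Suc.IH[OF d] have lc: "map label cs = concat ss" and Y1: "\<forall>i. Y1 i = sq (Lt cs) i @ Z i" by auto
    have lg: "length (group ss cs) = length ls" using len by simp
    have ml: "map label xs = ls" unfolding xs by (rule label_map2[OF lg])
    have mk: "map kids xs = group ss cs" unfolding xs by (rule kids_map2[OF lg])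
    have lcs: "length cs = sum_list (map length ss)" using arg_cong[OF lc, of length] by (simp add: length_concat)
    have chx: "ch xs = cs" using mk concat_group[of ss cs] lcs by (simp add: ch_def)
    have "map sig xs = map (map label) (map kids xs)" by (simp add: sig_def)
    also have "\<dots> = ss" using mk group_map[of label ss cs] lc group_concat[of ss ss "[]"] by simp
    finally have "map sig xs = ss" .
    then have sqx: "\<forall>i. sq xs i = map snd (filter (\<lambda>p. fst p = i) (zip ls ss))"
      using ml sq_zip by metis
    show ?thesis using ml Y Y1 sqx Lt_rec[of xs] chx by simp
  qed
qed

lemma decF_sound: "decF n as Y = Some (ts, Z) \<Longrightarrow> map label ts = as \<and> (\<forall>i. Y i = sq (F ts) i @ Z i)"
proof (induction as arbitrary: Y ts)
  case Nil then show ?case by auto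
next
  case (Cons a as)
  from Cons.prems obtain xs Y1 ts' where d1: "decL n [a] Y = Some (xs, Y1)" and
    d2: "decF n as Y1 = Some (ts', Z)" and ts: "ts = xs @ ts'" by (auto split: option.splits)
  from decL_sound[OF d1] obtain t where xs: "xs = [t]" "label t = a" and Y: "\<forall>i. Y i = sq (Lt [t]) i @ Y1 i"
    by (cases xs) auto
  from Cons.IH[OF d2] show ?case using xs Y ts by simp
qed

lemma pop_mono: "pop ls T = Some (ss, T1) \<Longrightarrow> pop ls (\<lambda>i. T i @ W i) = Some (ss, \<lambda>i. T1 i @ W i)"
proof (induction ls arbitrary: T ss)
  case Nil then show ?case by auto
next
  case (Cons l ls)
  from Cons.prems obtain s rest ss' where Yl: "T l = s # rest" and
    p: "pop ls (T(l := rest)) = Some (ss', T1)" and ss: "ss = s # ss'"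
    by (auto split: list.splits option.splits)
  have e: "(\<lambda>i. T i @ W i)(l := rest @ W l) = (\<lambda>i. (T(l := rest)) i @ W i)" by auto
  from Cons.IH[OF p] show ?case using Yl ss e by simp
qed

lemma decL_mono: "decL n ls T = Some (xs, T1) \<Longrightarrow> decL n ls (\<lambda>i. T i @ W i) = Some (xs, \<lambda>i. T1 i @ W i)"
proof (induction n arbitrary: ls T xs)
  case 0 then show ?case by (auto split: if_splits)
next
  case (Suc n)
  show ?case
  proof (cases "ls = []")
    case True then show ?thesis using Suc by auto
  next
    case False
    from Suc.prems False obtain ss Y1 cs where p: "pop ls T = Some (ss, Y1)" and
      d: "decL n (concat ss) Y1 = Some (cs, T1)" and xs: "xs = map2 PNode ls (group ss cs)"
      by (auto split: option.splits)
    show ?thesis using pop_mono[OF p, of W] Suc.IH[OF d] False xs by simp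
  qed
qed

lemma decF_mono: "decF n as T = Some (ts, T1) \<Longrightarrow> decF n as (\<lambda>i. T i @ W i) = Some (ts, \<lambda>i. T1 i @ W i)"
proof (induction as arbitrary: T ts)
  case Nil then show ?case by auto
next
  case (Cons a as)
  from Cons.prems obtain xs Y1 ts' where d1: "decL n [a] T = Some (xs, Y1)" and
    d2: "decF n as Y1 = Some (ts', T1)" and ts: "ts = xs @ ts'" by (auto split: option.splits)
  show ?case using decL_mono[OF d1, of W] Cons.IH[OF d2] ts by simp
qed



definition inv :: "nat \<Rightarrow> (nat \<Rightarrow> nat) \<Rightarrow> nat list \<Rightarrow> dat \<Rightarrow> bool" where
  "inv d E ls Y \<longleftrightarrow> (\<forall>j. cnt j ls + E j + (\<Sum>i\<in>{1..d}. cnt j (concat (Y i))) = length (Y j))"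

lemma cnt_0_iff: "cnt j ls = 0 \<longleftrightarrow> j \<notin> set ls"
  by (auto simp: cnt_def filter_empty_conv)

lemma pop_success: "(\<forall>l. cnt l ls \<le> length (Y l)) \<Longrightarrow> \<exists>ss Y1. pop ls Y = Some (ss, Y1)"
proof (induction ls arbitrary: Y)
  case Nil then show ?case by simp
next
  case (Cons l ls)
  from Cons.prems[rule_format, of l] obtain s rest where Yl: "Y l = s # rest"
    by (cases "Y l") (auto simp: cnt_Cons)
  have "\<forall>l'. cnt l' ls \<le> length ((Y(l := rest)) l')"
  proof
    fix l'
    have "cnt l' (l # ls) \<le> length (Y l')" using Cons.prems by blast
    then show "cnt l' ls \<le> length ((Y(l := rest)) l')" using Yl by (cases "l' = l") (auto simp: cnt_Cons)
  qed
  from Cons.IH[OF this] obtain ss Y1 where "pop ls (Y(l := rest)) = Some (ss, Y1)" by blast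
  then show ?case using Yl by simp
qed

lemma len_filter_zip: "length ss = length ls \<Longrightarrow> length (filter (\<lambda>p. fst p = j) (zip ls ss)) = cnt j ls"
proof (induction ls arbitrary: ss)
  case (Cons l ls) then show ?case by (cases ss) (auto simp: cnt_Cons)
qed simp

lemma partition_cnt:
  assumes "finite A"
  shows "length ss = length ls \<Longrightarrow> set ls \<subseteq> A \<Longrightarrow>
    (\<Sum>i\<in>A. cnt j (concat (map snd (filter (\<lambda>p. fst p = i) (zip ls ss))))) = cnt j (concat ss)"
proof (induction ls arbitrary: ss)
  case Nil then show ?case by simp
next
  case (Cons l ls)
  then obtain s ss' where ss: "ss = s # ss'" "length ss' = length ls" by (cases ss) auto
  have "(\<Sum>i\<in>A. cnt j (concat (map snd (filter (\<lambda>p. fst p = i) (zip (l # ls) ss))))) =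
        (\<Sum>i\<in>A. (if l = i then cnt j s else 0) + cnt j (concat (map snd (filter (\<lambda>p. fst p = i) (zip ls ss')))))"
    using ss by (intro sum.cong) auto
  also have "\<dots> = cnt j s + cnt j (concat ss')"
    using Cons assms ss by (simp add: sum.distrib)
  finally show ?case using ss by simp
qed

lemma partition_len:
  "finite A \<Longrightarrow> set ls \<subseteq> A \<Longrightarrow> (\<Sum>i\<in>A. cnt i ls) = length ls"
proof (induction ls)
  case (Cons l ls)
  have "(\<Sum>i\<in>A. cnt i (l # ls)) = (\<Sum>i\<in>A. (if l = i then 1 else 0) + cnt i ls)"
    by (intro sum.cong) (auto simp: cnt_Cons)
  then show ?case using Cons by (simp add: sum.distrib)
qed simp

lemma decL_success:
  assumes "inv d E ls Y" "\<forall>i. i \<notin> {1..d} \<longrightarrow> Y i = []"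
    "ls \<noteq> [] \<longrightarrow> (\<Sum>i\<in>{1..d}. length (Y i)) < n"
  shows "\<exists>xs Z. decL n ls Y = Some (xs, Z) \<and> inv d E [] Z"
  using assms
proof (induction n arbitrary: ls Y)
  case 0 then show ?case by auto
next
  case (Suc n)
  show ?case
  proof (cases "ls = []")
    case True then show ?thesis using Suc by auto
  next
    case False
    have cl: "\<forall>l. cnt l ls \<le> length (Y l)"
    proof
      fix l show "cnt l ls \<le> length (Y l)" using Suc.prems(1) unfolding inv_def by (metis le_add1 add.assoc)
    qed
    from pop_success[OF cl] obtain ss Y1 where p: "pop ls Y = Some (ss, Y1)" by blast
    from pop_sound[OF p] have len: "length ss = length ls" and
      YY: "\<forall>i. Y i = map snd (filter (\<lambda>p. fst p = i) (zip ls ss)) @ Y1 i" by auto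
    have setls: "set ls \<subseteq> {1..d}"
    proof
      fix l assume "l \<in> set ls"
      then have "cnt l ls > 0" using cnt_0_iff by (metis gr0I)
      then have "Y l \<noteq> []" using cl[rule_format, of l] by auto
      then show "l \<in> {1..d}" using Suc.prems(2) by blast
    qed
    have lenY: "\<And>j. length (Y j) = cnt j ls + length (Y1 j)"
      using YY len len_filter_zip by (metis length_append length_map)
    have sumY: "\<And>j. (\<Sum>i\<in>{1..d}. cnt j (concat (Y i))) = cnt j (concat ss) + (\<Sum>i\<in>{1..d}. cnt j (concat (Y1 i)))"
    proof -
      fix j
      have "(\<Sum>i\<in>{1..d}. cnt j (concat (Y i))) = (\<Sum>i\<in>{1..d}. cnt j (concat (map snd (filter (\<lambda>p. fst p = i) (zip ls ss))))
              + cnt j (concat (Y1 i)))"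
        by (intro sum.cong refl, subst YY) simp
      also have "\<dots> = cnt j (concat ss) + (\<Sum>i\<in>{1..d}. cnt j (concat (Y1 i)))"
        using partition_cnt[OF _ len setls] by (simp add: sum.distrib)
      finally show "?thesis j" .
    qed
    have inv1: "inv d E (concat ss) Y1"
      unfolding inv_def
    proof
      fix j
      have "cnt j ls + E j + (\<Sum>i\<in>{1..d}. cnt j (concat (Y i))) = length (Y j)"
        using Suc.prems(1) by (simp add: inv_def)
      then show "cnt j (concat ss) + E j + (\<Sum>i\<in>{1..d}. cnt j (concat (Y1 i))) = length (Y1 j)"
        using lenY[of j] sumY[of j] by simp
    qed
    have out1: "\<forall>i. i \<notin> {1..d} \<longrightarrow> Y1 i = []"
    proof (intro allI impI)
      fix i assume "i \<notin> {1..d}"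
      then have "Y i = []" using Suc.prems(2) by blast
      then show "Y1 i = []" using YY[rule_format, of i] by simp
    qed
    have "(\<Sum>i\<in>{1..d}. length (Y i)) = (\<Sum>i\<in>{1..d}. cnt i ls) + (\<Sum>i\<in>{1..d}. length (Y1 i))"
      using lenY by (simp add: sum.distrib)
    also have "(\<Sum>i\<in>{1..d}. cnt i ls) = length ls" using partition_len setls by blast
    moreover have "length ls > 0" using False by simp
    ultimately have "(\<Sum>i\<in>{1..d}. length (Y1 i)) < n" using Suc.prems(3) False by linarith
    then obtain cs Z where d: "decL n (concat ss) Y1 = Some (cs, Z)" and invZ: "inv d E [] Z"
      using Suc.IH[OF inv1 out1] by blast
    show ?thesis using False p d invZ by simp
  qed
qed

lemma decF_success:
  assumes "inv d (\<lambda>_. 0) as Y" "\<forall>i. i \<notin> {1..d} \<longrightarrow> Y i = []"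
    "(\<Sum>i\<in>{1..d}. length (Y i)) < n"
  shows "\<exists>ts Z. decF n as Y = Some (ts, Z) \<and> inv d (\<lambda>_. 0) [] Z"
  using assms
proof (induction as arbitrary: Y)
  case Nil then show ?case by simp
next
  case (Cons a as)
  have inva: "inv d (\<lambda>j. cnt j as) [a] Y" unfolding inv_def
  proof
    fix j
    have "cnt j (a # as) + 0 + (\<Sum>i\<in>{1..d}. cnt j (concat (Y i))) = length (Y j)"
      using Cons.prems(1) unfolding inv_def by blast
    then show "cnt j [a] + cnt j as + (\<Sum>i\<in>{1..d}. cnt j (concat (Y i))) = length (Y j)"
      using cnt_append[of j "[a]" as] by simp
  qed
  have "\<exists>xs Z. decL n [a] Y = Some (xs, Z) \<and> inv d (\<lambda>j. cnt j as) [] Z"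
    by (rule decL_success[OF inva Cons.prems(2)]) (use Cons.prems(3) in simp)
  then obtain xs Y1 where d1: "decL n [a] Y = Some (xs, Y1)" and i1: "inv d (\<lambda>j. cnt j as) [] Y1" by auto
  from decL_sound[OF d1] have YY: "\<forall>i. Y i = sq (Lt xs) i @ Y1 i" by auto
  have i1': "inv d (\<lambda>_. 0) as Y1" using i1 unfolding inv_def by simp
  have out: "\<forall>i. i \<notin> {1..d} \<longrightarrow> Y1 i = []"
  proof (intro allI impI)
    fix i assume "i \<notin> {1..d}"
    then have "Y i = []" using Cons.prems(2) by blast
    then show "Y1 i = []" using YY[rule_format, of i] by simp
  qed
  have "(\<Sum>i\<in>{1..d}. length (Y1 i)) \<le> (\<Sum>i\<in>{1..d}. length (Y i))"
    by (rule sum_mono) (subst YY, simp)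
  then obtain ts Z where "decF n as Y1 = Some (ts, Z)" "inv d (\<lambda>_. 0) [] Z"
    using Cons.IH[OF i1' out] Cons.prems(3) by fastforce
  then show ?case using d1 by simp
qed




definition barP :: "nat ptree list \<Rightarrow> bool" where
  "barP ts \<longleftrightarrow> (\<forall>v\<in>set (vertices ts). \<forall>w\<in>set (kids v). label w \<noteq> label v)"

lemma bfs_tree_leaf: "bfs_tree (PNode a []) = [(None, PNode a [])]"
  by (simp add: bfs_tree_def)

lemma restr_leaf: "\<forall>w\<in>set (kids v). label w \<noteq> i \<Longrightarrow> restr i v = PNode v []"
  by (cases v) (auto simp: filter_empty_conv)

lemma useq_bar:
  assumes "barP ts"
  shows "useq i ts = filter (\<lambda>v. label v = i) (F ts)"
proof -
  let ?vs = "filter (\<lambda>v. label v = i) (F ts)"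
  have "filter (\<lambda>(p, v). label v = i \<and> p \<noteq> Some i) (bfs_forest ts) =
        filter (\<lambda>p. label (snd p) = i) (bfs_forest ts)"
  proof (rule filter_cong[OF refl])
    fix x assume x: "x \<in> set (bfs_forest ts)"
    obtain p v where pv: "x = (p, v)" by force
    show "(case x of (p, v) \<Rightarrow> label v = i \<and> p \<noteq> Some i) = (label (snd x) = i)"
      using bfs_forest_parent[of p v ts] x pv assms unfolding barP_def by fastforce
  qed
  then have sr: "sub_roots i ts = ?vs"
    unfolding sub_roots_def by (simp add: filter_map vertices_F[symmetric] vertices_def comp_def)
  have "\<forall>v\<in>set ?vs. restr i v = PNode v []"
  proof
    fix v assume v: "v \<in> set ?vs"
    then have "v \<in> set (vertices ts)" "label v = i" by (auto simp: vertices_F)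
    then show "restr i v = PNode v []" using assms unfolding barP_def by (intro restr_leaf) auto
  qed
  then have sf: "subforest i ts = map (\<lambda>v. PNode v []) ?vs"
    unfolding subforest_def sr by simp
  have "bfs_forest (map (\<lambda>v. PNode v []) vs) = map (\<lambda>v. (None, PNode v [])) vs" for vs :: "nat ptree list"
    by (induction vs) (auto simp: bfs_forest_def bfs_tree_leaf)
  then show ?thesis unfolding useq_def sf by (simp add: comp_def)
qed

lemma pcount_cnt: "pcount j u = cnt j (sig u)"
  by (simp add: pcount_def cnt_def sig_def filter_map comp_def)

definition PsiY :: "nat \<Rightarrow> dat \<Rightarrow> (nat \<Rightarrow> nat) \<times> (nat \<Rightarrow> nat \<Rightarrow> nat \<Rightarrow> int)" where
  "PsiY d Y = ((\<lambda>i. if i \<in> {1..d} then length (Y i) else 0),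
      (\<lambda>i j n. if i \<in> {1..d} \<and> j \<in> {1..d} \<and> n \<le> length (Y i)
               then (\<Sum>k<n. int (cnt j (Y i ! k)) - (if i = j then 1 else 0))
               else 0))"

lemma Psi_bar: assumes "barP ts" shows "Psi d ts = PsiY d (sq (F ts))"
proof -
  have u: "\<And>i. useq i ts = filter (\<lambda>v. label v = i) (F ts)" using useq_bar[OF assms] .
  show ?thesis unfolding Psi_def PsiY_def u sq_def
    by (auto simp: fun_eq_iff pcount_cnt intro!: sum.cong)
qed

definition good :: "nat \<Rightarrow> dat \<Rightarrow> bool" where
  "good d Y \<longleftrightarrow> (\<forall>i. i \<notin> {1..d} \<longrightarrow> Y i = []) \<and>
     (\<forall>i. \<forall>s\<in>set (Y i). sorted s \<and> set s \<subseteq> {1..d} \<and> i \<notin> set s)"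

definition NN :: "nat \<Rightarrow> dat \<Rightarrow> nat" where "NN d Y = (\<Sum>i\<in>{1..d}. length (Y i))"

definition TS :: "nat \<Rightarrow> dat \<Rightarrow> (nat \<Rightarrow> nat) \<Rightarrow> nat \<Rightarrow> nat" where
  "TS d Y s j = (\<Sum>i\<in>{1..d}. cnt j (concat (take (s i) (Y i))))"

lemma sum_cnt_take: "n \<le> length xs \<Longrightarrow> (\<Sum>k<n. int (cnt j (xs ! k))) = int (cnt j (concat (take n xs)))"
proof (induction n)
  case (Suc n)
  then have "take (Suc n) xs = take n xs @ [xs ! n]" by (simp add: take_Suc_conv_app_nth)
  then show ?case using Suc by simp
qed simp

lemma PsiY_x:
  assumes "i \<in> {1..d}" "j \<in> {1..d}" "n \<le> length (Y i)"
  shows "snd (PsiY d Y) i j n = int (cnt j (concat (take n (Y i)))) - (if i = j then int n else 0)"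
proof -
  have "snd (PsiY d Y) i j n = (\<Sum>k<n. int (cnt j (Y i ! k))) - (\<Sum>k<n. (if i = j then 1 else 0))"
    using assms by (simp add: PsiY_def sum_subtractf)
  then show ?thesis using sum_cnt_take[OF assms(3)] by simp
qed

lemma PsiY_step:
  assumes "i \<in> {1..d}" "j \<in> {1..d}" "k < length (Y i)"
  shows "snd (PsiY d Y) i j (Suc k) = snd (PsiY d Y) i j k + int (cnt j (Y i ! k)) - (if i = j then 1 else 0)"
  using assms by (simp add: PsiY_def)

lemma good_cnt_self: "good d Y \<Longrightarrow> cnt i (concat (take n (Y i))) = 0"
  unfolding good_def cnt_0_iff by (auto dest: in_set_takeD)

lemma sum_if_eq: "j \<in> A \<Longrightarrow> finite A \<Longrightarrow> (\<Sum>i\<in>A. (if i = j then f i else 0)) = (f j :: int)"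
  by (simp add: sum.delta')

lemma sol_iff:
  assumes "good d Y" "\<forall>i\<in>{1..d}. s i \<le> length (Y i)" "j \<in> {1..d}"
  shows "(int (r j) + (\<Sum>i=1..d. snd (PsiY d Y) i j (s i)) = 0) \<longleftrightarrow> r j + TS d Y s j = s j"
proof -
  have "(\<Sum>i=1..d. snd (PsiY d Y) i j (s i)) =
        (\<Sum>i=1..d. int (cnt j (concat (take (s i) (Y i)))) - (if i = j then int (s i) else 0))"
    using assms by (intro sum.cong refl) (simp add: PsiY_x)
  also have "\<dots> = int (TS d Y s j) - int (s j)"
    using assms(3) by (simp add: sum_subtractf TS_def sum_if_eq)
  finally show ?thesis by linarith
qed

lemma minimality_generic:
  assumes good: "good d Y" and c: "set c \<subseteq> {1..d}" "\<forall>j\<in>{1..d}. cnt j c = r j"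
    and dec: "decF n c Y = Some (ts, \<lambda>_. [])" and fuel: "NN d Y < n"
    and sle: "\<forall>i\<in>{1..d}. s i \<le> length (Y i)" and sol: "\<forall>j\<in>{1..d}. r j + TS d Y s j = s j"
  shows "\<forall>i\<in>{1..d}. length (Y i) \<le> s i"
proof -
  define T where "T = (\<lambda>i. take (s i) (Y i))"
  have out: "\<forall>i. i \<notin> {1..d} \<longrightarrow> T i = []" using good unfolding good_def T_def by simp
  have invT: "inv d (\<lambda>_. 0) c T" unfolding inv_def
  proof
    fix j
    show "cnt j c + 0 + (\<Sum>i\<in>{1..d}. cnt j (concat (T i))) = length (T j)"
    proof (cases "j \<in> {1..d}")
      case True
      then have "s j \<le> length (Y j)" "cnt j c = r j" "r j + TS d Y s j = s j" using sle c(2) sol by auto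
      then show ?thesis by (simp add: T_def TS_def min_def)
    next
      case False
      have "cnt j c = 0" using c(1) False cnt_0_iff by blast
      moreover have "\<forall>i. cnt j (concat (T i)) = 0"
      proof
        fix i
        have "\<forall>x\<in>set (T i). j \<notin> set x"
          using good False unfolding good_def T_def by (meson in_set_takeD subsetD)
        then show "cnt j (concat (T i)) = 0" unfolding cnt_0_iff by simp
      qed
      ultimately show ?thesis using out False by simp
    qed
  qed
  have "(\<Sum>i\<in>{1..d}. length (T i)) < n"
  proof -
    have "(\<Sum>i\<in>{1..d}. length (T i)) \<le> NN d Y" unfolding NN_def T_def by (rule sum_mono) simp
    then show ?thesis using fuel by simp
  qed
  from decF_success[OF invT out this] obtain ts' Z' where d': "decF n c T = Some (ts', Z')" by blast
  have "(\<lambda>i. T i @ drop (s i) (Y i)) = Y" by (simp add: T_def)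
  with decF_mono[OF d', of "\<lambda>i. drop (s i) (Y i)"] dec
  have "\<forall>i. Z' i @ drop (s i) (Y i) = []" by (auto simp: fun_eq_iff)
  then show ?thesis by auto
qed

lemma F_wf: "\<forall>t\<in>set ts. wf_dtree d t \<Longrightarrow> v \<in> set (F ts) \<Longrightarrow> wf_dtree d v"
  unfolding F_def using wf_to_Lt[of "[t]" d v for t] by auto

lemma len_sq: "length (sq V j) = cnt j (map label V)"
  by (simp add: sq_def cnt_def filter_map comp_def)

lemma conservation_F:
  "cnt j (map label (F ts)) = cnt j (map label ts) + cnt j (concat (map sig (F ts)))"
proof (induction ts)
  case (Cons t ts)
  have "cnt j (map label (Lt [t])) = cnt j [label t] + cnt j (concat (map sig (Lt [t])))"
    using conservation[of j "[t]"] by simp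
  then show ?case using Cons cnt_append[of j "[label t]" "map label ts"] by simp
qed simp

lemma partition_sig:
  "finite A \<Longrightarrow> set (map label V) \<subseteq> A \<Longrightarrow> (\<Sum>i\<in>A. cnt j (concat (sq V i))) = cnt j (concat (map sig V))"
proof (induction V)
  case (Cons v V)
  have "(\<Sum>i\<in>A. cnt j (concat (sq (v # V) i))) = (\<Sum>i\<in>A. (if label v = i then cnt j (sig v) else 0) + cnt j (concat (sq V i)))"
    by (intro sum.cong) (auto simp: sq_def)
  then show ?case using Cons by (simp add: sum.distrib)
qed simp

lemma Fd_labels: "\<forall>t\<in>set ts. wf_dtree d t \<Longrightarrow> set (map label (F ts)) \<subseteq> {1..d}"
  using F_wf wf_label by fastforce

lemma inv_forest:
  assumes "\<forall>t\<in>set ts. wf_dtree d t"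
  shows "inv d (\<lambda>_. 0) (map label ts) (sq (F ts))"
  unfolding inv_def
proof
  fix j
  show "cnt j (map label ts) + 0 + (\<Sum>i\<in>{1..d}. cnt j (concat (sq (F ts) i))) = length (sq (F ts) j)"
    using partition_sig[OF _ Fd_labels[OF assms], of j] conservation_F[of j ts] len_sq[of "F ts" j] by simp
qed

lemma good_forest:
  assumes "\<forall>t\<in>set ts. wf_dtree d t" "barP ts"
  shows "good d (sq (F ts))"
  unfolding good_def
proof (intro conjI allI impI ballI)
  fix i assume "i \<notin> {1..d}"
  then show "sq (F ts) i = []" using Fd_labels[OF assms(1)] unfolding sq_def by (auto simp: filter_empty_conv)
next
  fix i s assume "s \<in> set (sq (F ts) i)"
  then obtain v where v: "v \<in> set (F ts)" "label v = i" "s = sig v" unfolding sq_def by auto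
  have "wf_dtree d v" using F_wf[OF assms(1) v(1)] .
  from wf_sig[OF this] show "sorted s" "set s \<subseteq> {1..d}" using v by auto
  show "i \<notin> set s" using assms(2) v unfolding barP_def vertices_F sig_def by fastforce
qed

lemma NN_forest:
  assumes "\<forall>t\<in>set ts. wf_dtree d t"
  shows "NN d (sq (F ts)) = length (F ts)"
proof -
  have "NN d (sq (F ts)) = (\<Sum>i\<in>{1..d}. cnt i (map label (F ts)))" unfolding NN_def len_sq ..
  also have "\<dots> = length (map label (F ts))" using partition_len Fd_labels[OF assms] by blast
  finally show ?thesis by simp
qed

lemma nverts_le_F: "t \<in> set ts \<Longrightarrow> nverts t \<le> length (F ts)"
proof (induction ts)
  case (Cons t' ts)
  have "nverts t' = length (Lt [t'])" using length_Lt[of "[t']"] by simp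
  then show ?case using Cons by auto
qed simp

lemma dec_forest:
  assumes "\<forall>t\<in>set ts. wf_dtree d t"
  shows "decF (Suc (NN d (sq (F ts)))) (map label ts) (sq (F ts)) = Some (ts, \<lambda>_. [])"
proof (rule decF_complete)
  show "\<forall>t\<in>set ts. nverts t \<le> Suc (NN d (sq (F ts)))"
    using nverts_le_F[of _ ts] NN_forest[OF assms] by (simp add: le_SucI)
qed simp

lemma Cdr_props: "c \<in> Cdr d r \<Longrightarrow> set c \<subseteq> {1..d} \<and> (\<forall>j\<in>{1..d}. cnt j c = r j)"
  unfolding Cdr_def cnt_def by auto

lemma smallest_generic:
  assumes good: "good d Y" and c: "set c \<subseteq> {1..d}" "\<forall>j\<in>{1..d}. cnt j c = r j"
    and inv: "inv d (\<lambda>_. 0) c Y" and dec: "decF (Suc (NN d Y)) c Y = Some (ts, \<lambda>_. [])"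
  shows "is_smallest_solution d r (fst (PsiY d Y)) (snd (PsiY d Y)) (fst (PsiY d Y))"
  unfolding is_smallest_solution_def
proof (intro conjI allI impI ballI)
  have q: "\<forall>i\<in>{1..d}. fst (PsiY d Y) i = length (Y i)" by (simp add: PsiY_def)
  show "is_solution d r (fst (PsiY d Y)) (snd (PsiY d Y)) (fst (PsiY d Y))"
    unfolding is_solution_def
  proof (intro conjI ballI)
    fix j assume j: "j \<in> {1..d}"
    have "(\<Sum>i=1..d. snd (PsiY d Y) i j (fst (PsiY d Y) i)) = (\<Sum>i=1..d. snd (PsiY d Y) i j (length (Y i)))"
      using q by (intro sum.cong) auto
    moreover have "int (r j) + (\<Sum>i=1..d. snd (PsiY d Y) i j (length (Y i))) = 0"
    proof (subst sol_iff[OF good _ j])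
      have "cnt j c + 0 + (\<Sum>i\<in>{1..d}. cnt j (concat (Y i))) = length (Y j)"
        using inv unfolding inv_def by blast
      then show "r j + TS d Y (\<lambda>i. length (Y i)) j = length (Y j)" using c(2) j by (simp add: TS_def)
    qed simp
    ultimately show "int (r j) + (\<Sum>i=1..d. snd (PsiY d Y) i j (fst (PsiY d Y) i)) = 0" by simp
  qed simp
next
  fix s' i assume sol: "is_solution d r (fst (PsiY d Y)) (snd (PsiY d Y)) s'" and i: "i \<in> {1..d}"
  have sle: "\<forall>i\<in>{1..d}. s' i \<le> length (Y i)" using sol unfolding is_solution_def by (simp add: PsiY_def)
  have "\<forall>j\<in>{1..d}. r j + TS d Y s' j = s' j"
    using sol sol_iff[OF good sle] unfolding is_solution_def by blast
  from minimality_generic[OF good c dec _ sle this] i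
  show "fst (PsiY d Y) i \<le> s' i" by (simp add: PsiY_def)
qed

lemma PsiY_in_barSr:
  assumes good: "good d Y" and ne: "\<forall>i\<in>{1..d}. Y i \<noteq> []"
    and sm: "is_smallest_solution d r (fst (PsiY d Y)) (snd (PsiY d Y)) (fst (PsiY d Y))"
  shows "PsiY d Y \<in> barSr d r"
proof -
  obtain q x where qx: "PsiY d Y = (q, x)" by force
  have qq: "q = (\<lambda>i. if i \<in> {1..d} then length (Y i) else 0)" using qx unfolding PsiY_def by auto
  have xx: "x = (\<lambda>i j n. if i \<in> {1..d} \<and> j \<in> {1..d} \<and> n \<le> length (Y i)
               then (\<Sum>k<n. int (cnt j (Y i ! k)) - (if i = j then 1 else 0)) else 0)"
    using qx unfolding PsiY_def by auto
  have q: "\<And>i. q i = (if i \<in> {1..d} then length (Y i) else 0)" using qq by simp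
  have x: "\<And>i j n. x i j n = (if i \<in> {1..d} \<and> j \<in> {1..d} \<and> n \<le> length (Y i)
               then (\<Sum>k<n. int (cnt j (Y i ! k)) - (if i = j then 1 else 0)) else 0)"
    using xx by simp
  have sx: "snd (PsiY d Y) = x" using qx by simp
  have step: "x i j (Suc k) = x i j k + int (cnt j (Y i ! k)) - (if i = j then 1 else 0)"
    if "i \<in> {1..d}" "j \<in> {1..d}" "k < length (Y i)" for i j k
    using PsiY_step[of i d j k Y, OF that] unfolding sx .
  have xd: "x i i k = - int k" if "i \<in> {1..d}" "k \<le> length (Y i)" for i k
    using PsiY_x[of i d i k Y, OF that(1) that(1) that(2)] good_cnt_self[OF good, of i k] unfolding sx by simp
  have "(q, x) \<in> Sd_fin d"
    unfolding Sd_fin_def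
  proof (simp only: mem_Collect_eq case_prod_conv, intro conjI allI ballI impI)
    fix i assume "i \<notin> {1..d}" then show "q i = 0" using q[of i] by auto
  next
    fix i j n assume "i \<notin> {1..d} \<or> j \<notin> {1..d} \<or> q i < n"
    then show "x i j n = 0" using q x by auto
  next
    fix i j assume "i \<in> {1..d}" "j \<in> {1..d}" then show "x i j 0 = 0" using x by simp
  next
    fix i j n assume "i \<in> {1..d}" "j \<in> {1..d}" "i \<noteq> j" "n < q i"
    then show "x i j n \<le> x i j (Suc n)" using step q by simp
  next
    fix i n assume "i \<in> {1..d}" "n < q i"
    then show "- 1 \<le> x i i (Suc n) - x i i n" using step q by simp
  qed
  moreover have "\<forall>i\<in>{1..d}. q i \<ge> 1" using ne q by (simp add: Suc_leI)
  moreover have "is_smallest_solution d r q x q" using sm qx by simp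
  moreover have "\<forall>i\<in>{1..d}. \<forall>k \<le> q i. x i i k = - int k" using xd q by simp
  ultimately show ?thesis unfolding barSr_def Sr_def qx by simp
qed

lemma barFr_props:
  assumes "ts \<in> barFr d r"
  shows "\<forall>t\<in>set ts. wf_dtree d t" "barP ts" "map label ts \<in> Cdr d r"
    "\<forall>i\<in>{1..d}. sq (F ts) i \<noteq> []"
  using assms unfolding barFr_def Fr_def Fd_def barP_def root_types_def
  by (auto simp: sq_def vertices_F filter_empty_conv)

lemma forward:
  assumes "ts \<in> barFr d r"
  shows "Phi d ts \<in> barSr d r \<times> Cdr d r"
proof -
  note p = barFr_props[OF assms]
  have g: "good d (sq (F ts))" by (rule good_forest[OF p(1,2)])
  have "is_smallest_solution d r (fst (PsiY d (sq (F ts)))) (snd (PsiY d (sq (F ts)))) (fst (PsiY d (sq (F ts))))"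
    using smallest_generic[OF g _ _ inv_forest[OF p(1)] dec_forest[OF p(1)]] Cdr_props[OF p(3)] by blast
  from PsiY_in_barSr[OF g p(4) this] show ?thesis
    using p(3) Psi_bar[OF p(2)] by (simp add: Phi_def root_types_def)
qed

lemma cnt_count_list: "cnt j xs = count_list xs j"
  by (induction xs) (auto simp: cnt_Cons)

lemma sorted_cnt_eq:
  assumes "sorted a" "sorted b" "set a \<subseteq> A" "set b \<subseteq> A" "\<forall>j\<in>A. cnt j a = cnt j b"
  shows "a = b"
proof -
  have "mset a = mset b"
  proof (rule multiset_eqI)
    fix j
    show "count (mset a) j = count (mset b) j"
    proof (cases "j \<in> A")
      case True then show ?thesis using assms(5) by (simp add: count_mset cnt_count_list)
    next
      case False then have "j \<notin> set a" "j \<notin> set b" using assms(3,4) by auto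
      then show ?thesis by (metis count_mset_0_iff)
    qed
  qed
  then have "sort a = b" using properties_for_sort[of b a] assms(2) by simp
  then show ?thesis using sorted_sort_id[OF assms(1)] by simp
qed

lemma PsiY_inj:
  assumes g1: "good d Y1" and g2: "good d Y2" and eq: "PsiY d Y1 = PsiY d Y2"
  shows "Y1 = Y2"
proof
  fix i
  show "Y1 i = Y2 i"
  proof (cases "i \<in> {1..d}")
    case False then show ?thesis using g1 g2 unfolding good_def by simp
  next
    case True
    have len: "length (Y1 i) = length (Y2 i)"
      using arg_cong[OF eq, of "\<lambda>p. fst p i"] True by (simp add: PsiY_def)
    show ?thesis
    proof (rule nth_equalityI[OF len])
      fix k assume k: "k < length (Y1 i)"
      have "\<forall>j\<in>{1..d}. cnt j (Y1 i ! k) = cnt j (Y2 i ! k)"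
      proof
        fix j assume j: "j \<in> {1..d}"
        have "snd (PsiY d Y1) i j (Suc k) - snd (PsiY d Y1) i j k = snd (PsiY d Y2) i j (Suc k) - snd (PsiY d Y2) i j k"
          using eq by simp
        then show "cnt j (Y1 i ! k) = cnt j (Y2 i ! k)"
          using PsiY_step[of i d j k Y1, OF True j k] PsiY_step[of i d j k Y2, OF True j] k len by simp
      qed
      moreover have "Y1 i ! k \<in> set (Y1 i)" "Y2 i ! k \<in> set (Y2 i)" using k len by auto
      ultimately show "Y1 i ! k = Y2 i ! k"
        using g1 g2 unfolding good_def by (intro sorted_cnt_eq[where A="{1..d}"]) auto
    qed
  qed
qed

lemma injective:
  assumes "ts1 \<in> barFr d r" "ts2 \<in> barFr d r" "Phi d ts1 = Phi d ts2"
  shows "ts1 = ts2"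
proof -
  note p1 = barFr_props[OF assms(1)] and p2 = barFr_props[OF assms(2)]
  have c: "map label ts1 = map label ts2" using assms(3) by (simp add: Phi_def root_types_def)
  have "PsiY d (sq (F ts1)) = PsiY d (sq (F ts2))"
    using assms(3) Psi_bar[OF p1(2)] Psi_bar[OF p2(2)] by (simp add: Phi_def)
  then have Y: "sq (F ts1) = sq (F ts2)" using PsiY_inj good_forest p1 p2 by blast
  show ?thesis using dec_forest[OF p1(1)] dec_forest[OF p2(1)] unfolding Y c by simp
qed

definition sg :: "(nat \<Rightarrow> nat \<Rightarrow> nat \<Rightarrow> int) \<Rightarrow> nat \<Rightarrow> nat \<Rightarrow> nat \<Rightarrow> nat list" where
  "sg x d i k = concat (map (\<lambda>j. replicate (nat (x i j (Suc k) - x i j k)) j) [1..<Suc d])"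

definition mkY :: "(nat \<Rightarrow> nat \<Rightarrow> nat \<Rightarrow> int) \<Rightarrow> (nat \<Rightarrow> nat) \<Rightarrow> nat \<Rightarrow> dat" where
  "mkY x q d = (\<lambda>i. if i \<in> {1..d} then map (sg x d i) [0..<q i] else [])"

lemma sorted_reps: "sorted L \<Longrightarrow> sorted (concat (map (\<lambda>j. replicate (f j) j) L))"
  by (induction L) (auto simp: sorted_append)

lemma cnt_replicate: "cnt j (replicate n j') = (if j' = j then n else 0)"
  by (induction n) (auto simp: cnt_Cons)

lemma cnt_reps: "distinct L \<Longrightarrow> cnt j (concat (map (\<lambda>j'. replicate (f j') j') L)) = (if j \<in> set L then f j else 0)"
  by (induction L) (auto simp: cnt_replicate)

lemma sg_props: "sorted (sg x d i k)" "set (sg x d i k) \<subseteq> {1..d}"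
  "cnt j (sg x d i k) = (if j \<in> {1..d} then nat (x i j (Suc k) - x i j k) else 0)"
    apply (unfold sg_def, rule sorted_reps, rule sorted_upt)
   apply (auto simp: sg_def)[1]
  apply (simp add: sg_def cnt_reps)
  done

lemma barSr_props:
  assumes "(q, x) \<in> barSr d r"
  shows "\<forall>i. i \<notin> {1..d} \<longrightarrow> q i = 0"
    "\<forall>i j n. (i \<notin> {1..d} \<or> j \<notin> {1..d} \<or> n > q i) \<longrightarrow> x i j n = 0"
    "\<forall>i\<in>{1..d}. \<forall>j\<in>{1..d}. x i j 0 = 0"
    "\<forall>i\<in>{1..d}. \<forall>j\<in>{1..d}. i \<noteq> j \<longrightarrow> (\<forall>n < q i. x i j n \<le> x i j (Suc n))"
    "\<forall>i\<in>{1..d}. q i \<ge> 1" "is_smallest_solution d r q x q"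
    "\<forall>i\<in>{1..d}. \<forall>k \<le> q i. x i i k = - int k"
  using assms unfolding barSr_def Sr_def Sd_fin_def by auto

lemma cnt_sg:
  assumes "(q, x) \<in> barSr d r" "i \<in> {1..d}" "j \<in> {1..d}" "k < q i"
  shows "int (cnt j (sg x d i k)) = x i j (Suc k) - x i j k + (if i = j then 1 else 0)"
proof (cases "i = j")
  case True
  have "x i i (Suc k) = - int (Suc k)" "x i i k = - int k"
    using barSr_props(7)[OF assms(1)] assms(2,4) by auto
  then show ?thesis using True assms(3) by (simp add: sg_props)
next
  case False
  have "x i j k \<le> x i j (Suc k)" using barSr_props(4)[OF assms(1)] assms False by blast
  then show ?thesis using False assms(3) by (simp add: sg_props)
qed

lemma mkY_good:
  assumes "(q, x) \<in> barSr d r"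
  shows "good d (mkY x q d)"
  unfolding good_def
proof (intro conjI allI impI ballI)
  fix i assume "i \<notin> {1..d}" then show "mkY x q d i = []" unfolding mkY_def by auto
next
  fix i s assume s: "s \<in> set (mkY x q d i)"
  then obtain k where i: "i \<in> {1..d}" and k: "k < q i" and s': "s = sg x d i k"
    by (auto simp: mkY_def split: if_splits)
  show "sorted s" "set s \<subseteq> {1..d}" using s' sg_props by auto
  have "x i i (Suc k) = - int (Suc k)" "x i i k = - int k"
    using barSr_props(7)[OF assms] i k by auto
  then have "int (cnt i s) = 0" using cnt_sg[OF assms i i k] s' by simp
  then show "i \<notin> set s" using cnt_0_iff by simp
qed

lemma mkY_Psi:
  assumes "(q, x) \<in> barSr d r"
  shows "PsiY d (mkY x q d) = (q, x)"
proof -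
  note b = barSr_props[OF assms]
  have "fst (PsiY d (mkY x q d)) = q"
  proof
    fix i show "fst (PsiY d (mkY x q d)) i = q i"
      using b(1) by (cases "i \<in> {1..d}") (auto simp: PsiY_def mkY_def)
  qed
  moreover have "snd (PsiY d (mkY x q d)) = x"
  proof (intro ext)
    fix i j n
    show "snd (PsiY d (mkY x q d)) i j n = x i j n"
    proof (cases "i \<in> {1..d} \<and> j \<in> {1..d} \<and> n \<le> q i")
      case True
      then have "snd (PsiY d (mkY x q d)) i j n = (\<Sum>k<n. x i j (Suc k) - x i j k)"
        using cnt_sg[OF assms] by (auto simp: PsiY_def mkY_def intro!: sum.cong)
      also have "\<dots> = x i j n" using b(3) True by (simp add: sum_lessThan_telescope)
      finally show ?thesis .
    next
      case False
      then show ?thesis using b(2) by (auto simp: PsiY_def mkY_def)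
    qed
  qed
  ultimately show ?thesis by (metis prod.collapse)
qed

lemma surjective:
  assumes qx: "(q, x) \<in> barSr d r" and c: "c \<in> Cdr d r"
  shows "\<exists>ts\<in>barFr d r. Phi d ts = ((q, x), c)"
proof -
  note b = barSr_props[OF qx]
  define Y where "Y = mkY x q d"
  have g: "good d Y" unfolding Y_def by (rule mkY_good[OF qx])
  have P: "PsiY d Y = (q, x)" unfolding Y_def by (rule mkY_Psi[OF qx])
  have lenY: "\<forall>i\<in>{1..d}. length (Y i) = q i" by (simp add: Y_def mkY_def)
  note cp = Cdr_props[OF c]
  have cntsig: "cnt j s = 0" if "j \<notin> {1..d}" "s \<in> set (Y i)" for i j s
    using g that unfolding good_def cnt_0_iff by blast
  have solq: "\<forall>j\<in>{1..d}. r j + TS d Y q j = q j"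
  proof
    fix j assume j: "j \<in> {1..d}"
    have "int (r j) + (\<Sum>i=1..d. snd (PsiY d Y) i j (q i)) = 0"
      using b(6) P j unfolding is_smallest_solution_def is_solution_def by simp
    then show "r j + TS d Y q j = q j" using sol_iff[OF g _ j, of q r] lenY by simp
  qed
  have invY: "inv d (\<lambda>_. 0) c Y" unfolding inv_def
  proof
    fix j
    show "cnt j c + 0 + (\<Sum>i\<in>{1..d}. cnt j (concat (Y i))) = length (Y j)"
    proof (cases "j \<in> {1..d}")
      case True
      have "TS d Y q j = (\<Sum>i\<in>{1..d}. cnt j (concat (Y i)))"
        unfolding TS_def using lenY by (intro sum.cong) auto
      moreover have "r j + TS d Y q j = q j" "cnt j c = r j" "length (Y j) = q j"
        using solq True cp lenY by auto
      ultimately show ?thesis by simp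
    next
      case False
      have "cnt j c = 0" using cp False cnt_0_iff by blast
      moreover have "\<forall>i. cnt j (concat (Y i)) = 0" using cntsig[OF False] unfolding cnt_0_iff
        by (simp add: cnt_0_iff)
      moreover have "Y j = []" using g False unfolding good_def by blast
      ultimately show ?thesis by simp
    qed
  qed
  have out: "\<forall>i. i \<notin> {1..d} \<longrightarrow> Y i = []" using g unfolding good_def by blast
  obtain ts Z where dec: "decF (Suc (NN d Y)) c Y = Some (ts, Z)" and invZ: "inv d (\<lambda>_. 0) [] Z"
    using decF_success[OF invY out] unfolding NN_def by blast
  from decF_sound[OF dec] have lab: "map label ts = c" and YZ: "\<forall>i. Y i = sq (F ts) i @ Z i" by auto
  define s where "s = (\<lambda>i. length (sq (F ts) i))"
  have sle: "\<forall>i\<in>{1..d}. s i \<le> length (Y i)" using YZ unfolding s_def by (metis le_add1 length_append)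
  have sols: "\<forall>j\<in>{1..d}. r j + TS d Y s j = s j"
  proof
    fix j assume j: "j \<in> {1..d}"
    have e1: "r j + (\<Sum>i\<in>{1..d}. cnt j (concat (Y i))) = length (Y j)"
      using invY cp j unfolding inv_def by (metis add.right_neutral)
    have e2: "(\<Sum>i\<in>{1..d}. cnt j (concat (Z i))) = length (Z j)" using invZ unfolding inv_def by simp
    have "(\<Sum>i\<in>{1..d}. cnt j (concat (Y i))) = TS d Y s j + (\<Sum>i\<in>{1..d}. cnt j (concat (Z i)))"
      unfolding TS_def s_def by (subst sum.distrib[symmetric], intro sum.cong refl, subst (1 2) YZ) simp
    then show "r j + TS d Y s j = s j" using e1 e2 YZ[rule_format, of j] unfolding s_def by simp
  qed
  have "is_solution d r q x s"
    unfolding is_solution_def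
  proof (intro conjI ballI)
    fix i assume "i \<in> {1..d}" then show "s i \<le> q i" using sle lenY by simp
  next
    fix j assume j: "j \<in> {1..d}"
    have "int (r j) + (\<Sum>i=1..d. snd (PsiY d Y) i j (s i)) = 0" using sol_iff[OF g sle j] sols j by blast
    then show "int (r j) + (\<Sum>i = 1..d. x i j (s i)) = 0" using P by simp
  qed
  with b(6) have "\<forall>i\<in>{1..d}. q i \<le> s i" unfolding is_smallest_solution_def by blast
  then have "\<forall>i\<in>{1..d}. Z i = []" using YZ lenY unfolding s_def by (metis add_le_same_cancel1 le_zero_eq length_0_conv length_append)
  moreover have "\<forall>i. i \<notin> {1..d} \<longrightarrow> Z i = []" using out YZ by (metis append_is_Nil_conv)
  ultimately have YF: "sq (F ts) = Y" using YZ by (metis append.right_neutral ext)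
  have sigY: "sig v \<in> set (Y (label v))" if "v \<in> set (F ts)" for v
    using that unfolding YF[symmetric] sq_def by auto
  have labv: "label v \<in> {1..d}" and sv: "sorted (sig v)" and nself: "label v \<notin> set (sig v)"
    if "v \<in> set (F ts)" for v
  proof -
    have "Y (label v) \<noteq> []" using sigY[OF that] by auto
    then show "label v \<in> {1..d}" using out by blast
    show "sorted (sig v)" "label v \<notin> set (sig v)" using g sigY[OF that] unfolding good_def by auto
  qed
  have wf: "\<forall>t\<in>set ts. wf_dtree d t"
  proof
    fix t assume t: "t \<in> set ts"
    have sub: "set (Lt [t]) \<subseteq> set (F ts)" using t unfolding F_def by auto
    have "\<forall>v\<in>set (Lt [t]). label v \<in> {1..d} \<and> sorted (sig v)" using sub labv sv by blast
    from wf_from_Lt[OF this] show "wf_dtree d t" using Lt_sub[of "[t]"] by auto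
  qed
  have bar: "barP ts" unfolding barP_def vertices_F
  proof (intro ballI)
    fix v w assume "v \<in> set (F ts)" "w \<in> set (kids v)"
    then show "label w \<noteq> label v" using nself[of v] unfolding sig_def by (metis image_eqI set_map)
  qed
  have types: "\<forall>i\<in>{1..d}. \<exists>v\<in>set (vertices ts). label v = i"
  proof
    fix i assume i: "i \<in> {1..d}"
    then have "sq (F ts) i \<noteq> []" using YF lenY b(5) by fastforce
    then show "\<exists>v\<in>set (vertices ts). label v = i" unfolding sq_def vertices_F by (auto simp: filter_empty_conv)
  qed
  have "ts \<in> barFr d r"
    unfolding barFr_def Fr_def Fd_def root_types_def
    using wf bar types lab c unfolding barP_def by (auto simp: Cdr_def)
  moreover have "Phi d ts = ((q, x), c)"
    using Psi_bar[OF bar] YF P lab by (simp add: Phi_def root_types_def)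
  ultimately show ?thesis by blast
qed

theorem lemma2p5:
  fixes d :: nat and r :: "nat \<Rightarrow> nat"
  assumes "d \<ge> 2"
    and "\<exists>i\<in>{1..d}. r i > 0"
  shows "bij_betw (Phi d) (barFr d r) (barSr d r \<times> Cdr d r)"
  unfolding bij_betw_def
proof (intro conjI)
  show "inj_on (Phi d) (barFr d r)" by (rule inj_onI) (rule injective)
  show "Phi d ` barFr d r = barSr d r \<times> Cdr d r"
  proof
    show "Phi d ` barFr d r \<subseteq> barSr d r \<times> Cdr d r" using forward by blast
    show "barSr d r \<times> Cdr d r \<subseteq> Phi d ` barFr d r"
    proof
      fix p assume "p \<in> barSr d r \<times> Cdr d r"
      then obtain q x c where p: "p = ((q, x), c)" "(q, x) \<in> barSr d r" "c \<in> Cdr d r" by force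
      from surjective[OF p(2,3)] show "p \<in> Phi d ` barFr d r" using p(1) by force
    qed
  qed
qed


end
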